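(* Let $K$ be an infinite field and $n\ge 4$. Let $f\in K[x_1,\ldots,x_n]$ be of the form $f(x)=\lambda\,l_1(x)^{\alpha_1}\cdots l_k(x)^{\alpha_k}$, where $\lambda$ is a nonzero constant, $l_i(x)=\sum_{j=1}^n l_{ij}x_j$ are linear forms with $l_i$ not proportional to $l_j$ for $i\ne j$, and assume ( * ): the $k$ coefficients $l_{11},\ldots,l_{k1}$ are distinct and nonzero, and $l_{in}=1$ for all $i$. Then the following algorithm outputs a correct factorization of $f$ (equal to the given one up to a permutation of the factors): 1. For $j=2,\ldots,n-1$, let $g_j(x_1,x_j)=f\circ\pi_j$, where $\pi_j$ sends $x_n$ to $1$, leaves $x_1$ and $x_j$ unchanged and sets all other variables to $0$; compute the dense representation of each $g_j$ by interpolation. 2. Using a bivariate factorization algorithm, write each $g_j$ as $g_j(x_1,x_j)=\lambda\prod_{i=1}^k(a_{ij}x_1+b_{ij}x_j+1)^{\beta_{ij}}$. 3. Reorder the factors of the $g_j$ so that the tuples $(a_{1j},\ldots,a_{kj})$ are identical for all $j$, obtaining $g_j(x_1,x_j)=\lambda\prod_{i=1}^k(a_ix_1+c_{ij}x_j+1)^{\gamma_i}$ with exponents $\gamma_i$ independent of $j$. 4. Output $f(x_1,\ldots,x_n)=\lambda\prod_{i=1}^k(a_ix_1+c_{i2}x_2+\cdots+c_{i,n-1}x_{n-1}+x_n)^{\gamma_i}$.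
   Context: The bivariate factorization algorithm in step 2 returns the factorization of $g_j$ into irreducible factors with multiplicities over a field containing the coefficients of the $l_i$ (the statement includes the assertion that these factorizations have the displayed shape and that the reordering in step 3 is possible). *)

theory Defs
  imports "HOL-Computational_Algebra.Computational_Algebra"
begin

text \<open>Bivariate polynomials in K[x1, xj] are represented as 'a poly poly:
  the outer variable is x_j, the inner (coefficient) variable is x_1.\<close>

definition eval2 :: "'a::comm_semiring_1 poly poly \<Rightarrow> 'a \<Rightarrow> 'a \<Rightarrow> 'a" where
  "eval2 G x1 xj = poly (poly G [:xj:]) x1"

definition lin2 :: "'a::comm_semiring_1 \<Rightarrow> 'a \<Rightarrow> 'a poly poly" where
  "lin2 a b = [:[:1, a:], [:b:]:]"

definition feval :: "nat \<Rightarrow> nat \<Rightarrow> 'a::comm_semiring_1 \<Rightarrow> (nat \<Rightarrow> nat \<Rightarrow> 'a) \<Rightarrow> (nat \<Rightarrow> nat)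
    \<Rightarrow> (nat \<Rightarrow> 'a) \<Rightarrow> 'a" where
  "feval n k lam l \<alpha> x = lam * (\<Prod>i\<in>{1..k}. (\<Sum>m\<in>{1..n}. l i m * x m) ^ \<alpha> i)"

definition pi_pt :: "nat \<Rightarrow> nat \<Rightarrow> 'a::zero_neq_one \<Rightarrow> 'a \<Rightarrow> nat \<Rightarrow> 'a" where
  "pi_pt n j x1 xj = (\<lambda>m. if m = 1 then x1 else if m = j then xj else if m = n then 1 else 0)"

end

theory Submission imports Defs begin
lemma lin2_irr:
  fixes a b :: "'a::field"
  assumes "a \<noteq> 0"
  shows "irreducible (lin2 a b)"
proof (cases "b = 0")
  case True
  have "lin2 a b = [:[:1,a:]:]" using True by (simp add: lin2_def)
  then show ?thesis using assms by (simp add: irreducible_const_poly_iff irreducible_linear_field_poly)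
next
  case False
  show ?thesis unfolding lin2_def
  proof (rule irreducibleI)
    show "[:[:1, a:], [:b:]:] \<noteq> 0" by simp
    show "\<not> is_unit [:[:1, a:], [:b:]:]" using False by (auto simp: is_unit_poly_iff)
    fix p q :: "'a poly poly" assume pq: "[:[:1, a:], [:b:]:] = p * q"
    then have nz: "p \<noteq> 0" "q \<noteq> 0" by auto
    have "degree (p * q) = 1" using pq[symmetric] False by simp
    then have d: "degree p + degree q = 1" using nz by (simp add: degree_mult_eq)
    have c1: "coeff (p * q) 1 = [:b:]" using pq[symmetric] by simp
    have ub: "is_unit [:b:]" using False by (simp add: is_unit_const_poly_iff dvd_field_iff)
    show "is_unit p \<or> is_unit q"
    proof (cases "degree p = 0")
      case True
      then obtain d where pd: "p = [:d:]" by (auto elim: degree_eq_zeroE)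
      have "d * coeff q 1 = [:b:]" using c1 pd by simp
      then have "d dvd [:b:]" by (metis dvdI)
      then have "is_unit d" using ub dvd_unit_imp_unit by blast
      then show ?thesis using pd by (simp add: is_unit_const_poly_iff)
    next
      case False
      then have "degree q = 0" using d by simp
      then obtain d where qd: "q = [:d:]" by (auto elim: degree_eq_zeroE)
      have "coeff p 1 * d = [:b:]" using c1 qd by (simp add: mult.commute)
      then have "d dvd [:b:]" by (metis dvdI mult.commute)
      then have "is_unit d" using ub dvd_unit_imp_unit by blast
      then show ?thesis using qd by (simp add: is_unit_const_poly_iff)
    qed
  qed
qed

lemma eval2_mult: "eval2 (p * q) x y = eval2 p x y * eval2 q x y"
  by (simp add: eval2_def)
lemma eval2_power: "eval2 (p ^ m) x y = eval2 p x y ^ m"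
  by (induct m) (simp_all add: eval2_def)
lemma eval2_prod: "eval2 (\<Prod>i\<in>S. f i) x y = (\<Prod>i\<in>S. eval2 (f i) x y)"
  by (induct S rule: infinite_finite_induct) (simp_all add: eval2_def)
lemma eval2_lin2: "eval2 (lin2 a b) x y = a * x + b * y + 1"
  by (simp add: eval2_def lin2_def algebra_simps)
lemma eval2_const: "eval2 [:[:c:]:] x y = c"
  by (simp add: eval2_def)

lemma lin2_inj: "lin2 a b = lin2 a' b' \<longleftrightarrow> a = a' \<and> b = b'"
  by (auto simp: lin2_def)

lemma lin2_nz: "lin2 a b \<noteq> 0"
  by (simp add: lin2_def)

lemma lin2_irr_nz: fixes a b :: "'a::field" assumes "irreducible (lin2 a b)" shows "a \<noteq> 0 \<or> b \<noteq> 0"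
proof (rule ccontr)
  assume "\<not> (a \<noteq> 0 \<or> b \<noteq> 0)"
  then have "lin2 a b = [:[:1:]:]" by (simp add: lin2_def)
  then have "is_unit (lin2 a b)" by (simp add: is_unit_poly_iff)
  then show False using assms by (simp add: irreducible_def)
qed

lemma all_roots_zero:
  fixes Q :: "'a::idom poly"
  assumes "infinite (UNIV :: 'a set)" "\<And>s. poly Q s = 0"
  shows "Q = 0"
proof (rule ccontr)
  assume "Q \<noteq> 0"
  then have "finite {x. poly Q x = 0}" by (rule poly_roots_finite)
  moreover have "{x. poly Q x = 0} = UNIV" using assms(2) by blast
  ultimately show False using assms(1) by simp
qed

lemma poly2_eq:
  fixes P Q :: "'a::field poly poly"
  assumes inf: "infinite (UNIV :: 'a set)" and h: "\<And>x y. eval2 P x y = eval2 Q x y"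
  shows "P = Q"
proof -
  have 1: "poly P [:y:] = poly Q [:y:]" for y
  proof -
    have "poly (poly P [:y:] - poly Q [:y:]) x = 0" for x using h[of x y] by (simp add: eval2_def)
    then have "poly P [:y:] - poly Q [:y:] = 0" using inf by (rule all_roots_zero[rotated])
    then show ?thesis by simp
  qed
  have sub: "range (\<lambda>y. [:y:]) \<subseteq> {z. poly (P - Q) z = 0}" using 1 by auto
  have "inj (\<lambda>y::'a. [:y:])" by (simp add: inj_on_def)
  then have "infinite (range (\<lambda>y::'a. [:y:]))" using inf finite_imageD by blast
  then have "infinite {z. poly (P - Q) z = 0}" using sub finite_subset by blast
  then have "P - Q = 0" using poly_roots_finite by blast
  then show ?thesis by simp
qed

lemma line_cover:
  fixes a b :: "'a::field" and p q :: "nat \<Rightarrow> 'a"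
  assumes inf: "infinite (UNIV :: 'a set)" and ab: "a \<noteq> 0 \<or> b \<noteq> 0" and fin: "finite T"
    and h: "\<And>x y. a*x + b*y + 1 = 0 \<Longrightarrow> (\<exists>t\<in>T. p t * x + q t * y + 1 = 0)"
  shows "\<exists>t\<in>T. p t = a \<and> q t = b"
proof (cases "b = 0")
  case False
  define Q where "Q = (\<Prod>t\<in>T. [:b - q t, b * p t - a * q t:])"
  have Q0: "poly Q s = 0" for s
  proof -
    have l: "a * s + b * (- (1 + a*s)/b) + 1 = 0" using False by (simp add: field_simps)
    obtain t where t: "t \<in> T" "p t * s + q t * (- (1 + a*s)/b) + 1 = 0" using h[OF l] by blast
    have "(b - q t) + (b * p t - a * q t) * s = b * (p t * s + q t * (- (1 + a*s)/b) + 1)"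
      using False by (simp add: field_simps)
    then have "(b - q t) + (b * p t - a * q t) * s = 0" using t by simp
    moreover have "poly [:b - q t, b * p t - a * q t:] s = (b - q t) + (b * p t - a * q t) * s" by (simp add: mult.commute)
    ultimately have "poly [:b - q t, b * p t - a * q t:] s = 0" by simp
    then show ?thesis unfolding Q_def poly_prod by (intro prod_zero[OF fin] bexI[OF _ t(1)])
  qed
  have "Q = 0" using all_roots_zero[OF inf Q0] .
  then have "\<exists>t\<in>T. [:b - q t, b * p t - a * q t:] = 0" unfolding Q_def using fin
    by (simp only: prod_zero_iff)
  then obtain t where "t \<in> T" "[:b - q t, b * p t - a * q t:] = 0" by blast
  then show ?thesis using False by auto
next
  case True
  then have a: "a \<noteq> 0" using ab by simp
  define Q where "Q = (\<Prod>t\<in>T. [:a - p t, a * q t:])"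
  have Q0: "poly Q s = 0" for s
  proof -
    have l: "a * (-1/a) + b * s + 1 = 0" using a True by (simp add: field_simps)
    obtain t where t: "t \<in> T" "p t * (-1/a) + q t * s + 1 = 0" using h[OF l] by blast
    have "(a - p t) + (a * q t) * s = a * (p t * (-1/a) + q t * s + 1)"
      using a by (simp add: field_simps)
    then have "(a - p t) + (a * q t) * s = 0" using t by simp
    moreover have "poly [:a - p t, a * q t:] s = (a - p t) + (a * q t) * s" by (simp add: mult.commute)
    ultimately have "poly [:a - p t, a * q t:] s = 0" by simp
    then show ?thesis unfolding Q_def poly_prod by (intro prod_zero[OF fin] bexI[OF _ t(1)])
  qed
  have "Q = 0" using all_roots_zero[OF inf Q0] .
  then have "\<exists>t\<in>T. [:a - p t, a * q t:] = 0" unfolding Q_def using fin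
    by (simp only: prod_zero_iff)
  then obtain t where "t \<in> T" "[:a - p t, a * q t:] = 0" by blast
  then show ?thesis using a True by auto
qed

lemma eval2_prodexp:
  fixes A B :: "nat \<Rightarrow> 'a::field"
  assumes "finite S"
  shows "eval2 (\<Prod>i\<in>S. lin2 (A i) (B i) ^ e i) x y = 0 \<longleftrightarrow>
         (\<exists>i\<in>S. e i > 0 \<and> A i * x + B i * y + 1 = 0)"
  using assms by (auto simp: eval2_prod eval2_power eval2_lin2 prod_zero_iff)

lemma one_side:
  fixes A B :: "nat \<Rightarrow> 'a::field"
  assumes inf: "infinite (UNIV :: 'a set)" and fin: "finite S"
    and nz: "\<forall>i\<in>S. A i \<noteq> 0 \<or> B i \<noteq> 0"
    and dist: "\<forall>i\<in>S. \<forall>i'\<in>S. i \<noteq> i' \<longrightarrow> (A i \<noteq> A i' \<or> B i \<noteq> B i')"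
    and eq: "(\<Prod>i\<in>S. lin2 (A i) (B i) ^ \<beta> i) = (\<Prod>i\<in>S. lin2 (A i) (B i) ^ \<gamma> i)"
    and i: "i \<in> S" "\<beta> i > 0"
  shows "\<gamma> i > 0"
proof -
  have "\<exists>t\<in>{t\<in>S. \<gamma> t > 0}. A t = A i \<and> B t = B i"
  proof (rule line_cover[OF inf])
    show "A i \<noteq> 0 \<or> B i \<noteq> 0" using nz i by auto
    show "finite {t\<in>S. \<gamma> t > 0}" using fin by simp
    fix x y assume l: "A i * x + B i * y + 1 = 0"
    have "eval2 (\<Prod>i\<in>S. lin2 (A i) (B i) ^ \<beta> i) x y = 0"
      by (rule eval2_prodexp[OF fin, THEN iffD2]) (use l i in blast)
    then have "eval2 (\<Prod>i\<in>S. lin2 (A i) (B i) ^ \<gamma> i) x y = 0" using eq by simp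
    then have "\<exists>t\<in>S. \<gamma> t > 0 \<and> A t * x + B t * y + 1 = 0"
      by (rule eval2_prodexp[OF fin, THEN iffD1])
    then show "\<exists>t\<in>{t\<in>S. \<gamma> t > 0}. A t * x + B t * y + 1 = 0" by blast
  qed
  then obtain t where t: "t \<in> S" "\<gamma> t > 0" "A t = A i" "B t = B i" by blast
  have "t = i" using dist t i by metis
  then show ?thesis using t by simp
qed

lemma prod_split1:
  fixes A B :: "nat \<Rightarrow> 'a::field"
  assumes "finite S" "i \<in> S" "e i > 0"
  shows "(\<Prod>t\<in>S. lin2 (A t) (B t) ^ e t) =
         lin2 (A i) (B i) * (\<Prod>t\<in>S. lin2 (A t) (B t) ^ (e(i := e i - 1)) t)"
proof -
  have "(\<Prod>t\<in>S. lin2 (A t) (B t) ^ e t) = lin2 (A i) (B i) ^ e i * (\<Prod>t\<in>S-{i}. lin2 (A t) (B t) ^ e t)"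
    using assms by (simp add: prod.remove)
  also have "lin2 (A i) (B i) ^ e i = lin2 (A i) (B i) * lin2 (A i) (B i) ^ (e i - 1)"
    using assms(3) by (metis Suc_diff_1 power_Suc)
  also have "(\<Prod>t\<in>S-{i}. lin2 (A t) (B t) ^ e t) = (\<Prod>t\<in>S-{i}. lin2 (A t) (B t) ^ (e(i := e i - 1)) t)"
    by (rule prod.cong) auto
  also have "(\<Prod>t\<in>S. lin2 (A t) (B t) ^ (e(i := e i - 1)) t) =
     lin2 (A i) (B i) ^ (e i - 1) * (\<Prod>t\<in>S-{i}. lin2 (A t) (B t) ^ (e(i := e i - 1)) t)"
    using assms by (simp add: prod.remove)
  ultimately show ?thesis by (simp add: mult.assoc)
qed

lemma exps_eq:
  fixes A B :: "nat \<Rightarrow> 'a::field"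
  assumes inf: "infinite (UNIV :: 'a set)" and fin: "finite S"
    and nz: "\<forall>i\<in>S. A i \<noteq> 0 \<or> B i \<noteq> 0"
    and dist: "\<forall>i\<in>S. \<forall>i'\<in>S. i \<noteq> i' \<longrightarrow> (A i \<noteq> A i' \<or> B i \<noteq> B i')"
    and eq: "(\<Prod>i\<in>S. lin2 (A i) (B i) ^ \<beta> i) = (\<Prod>i\<in>S. lin2 (A i) (B i) ^ \<gamma> i)"
  shows "\<forall>i\<in>S. \<beta> i = \<gamma> i"
  using eq
proof (induction "sum \<beta> S" arbitrary: \<beta> \<gamma> rule: less_induct)
  case less
  show ?case
  proof (cases "\<exists>i\<in>S. \<beta> i > 0")
    case False
    then have b0: "\<forall>i\<in>S. \<beta> i = 0" by auto
    have "\<gamma> i = 0" if "i \<in> S" for i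
    proof (rule ccontr)
      assume "\<gamma> i \<noteq> 0"
      then have "\<gamma> i > 0" by simp
      then have "\<beta> i > 0" using one_side[OF inf fin nz dist less.prems[symmetric] that] by blast
      then show False using b0 that by auto
    qed
    then show ?thesis using b0 by auto
  next
    case True
    then obtain i where i: "i \<in> S" "\<beta> i > 0" by blast
    have gi: "\<gamma> i > 0" using one_side[OF inf fin nz dist less.prems i] .
    define \<beta>' where "\<beta>' = \<beta>(i := \<beta> i - 1)"
    define \<gamma>' where "\<gamma>' = \<gamma>(i := \<gamma> i - 1)"
    have e1: "(\<Prod>t\<in>S. lin2 (A t) (B t) ^ \<beta> t) = lin2 (A i) (B i) * (\<Prod>t\<in>S. lin2 (A t) (B t) ^ \<beta>' t)"
      unfolding \<beta>'_def by (rule prod_split1[where e=\<beta>, OF fin i])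
    have e2: "(\<Prod>t\<in>S. lin2 (A t) (B t) ^ \<gamma> t) = lin2 (A i) (B i) * (\<Prod>t\<in>S. lin2 (A t) (B t) ^ \<gamma>' t)"
      unfolding \<gamma>'_def by (rule prod_split1[where e=\<gamma>, OF fin i(1) gi])
    have "lin2 (A i) (B i) * (\<Prod>t\<in>S. lin2 (A t) (B t) ^ \<beta>' t) =
          lin2 (A i) (B i) * (\<Prod>t\<in>S. lin2 (A t) (B t) ^ \<gamma>' t)"
      using less.prems e1 e2 by simp
    then have eq': "(\<Prod>t\<in>S. lin2 (A t) (B t) ^ \<beta>' t) = (\<Prod>t\<in>S. lin2 (A t) (B t) ^ \<gamma>' t)"
      using mult_left_cancel[OF lin2_nz[of "A i" "B i"]] by blast
    have s1: "sum \<beta> S = \<beta> i + sum \<beta> (S - {i})" using fin i by (simp add: sum.remove)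
    have s2: "sum \<beta>' S = \<beta>' i + sum \<beta>' (S - {i})" using fin i by (simp add: sum.remove)
    have s3: "sum \<beta>' (S - {i}) = sum \<beta> (S - {i})" unfolding \<beta>'_def by (rule sum.cong) auto
    have "\<beta>' i < \<beta> i" using i(2) unfolding \<beta>'_def by simp
    then have "sum \<beta>' S < sum \<beta> S" using s1 s2 s3 by linarith
    then have IH: "\<forall>t\<in>S. \<beta>' t = \<gamma>' t" using less.hyps eq' by blast
    show ?thesis
    proof
      fix t assume t: "t \<in> S"
      show "\<beta> t = \<gamma> t"
      proof (cases "t = i")
        case True
        have "\<beta>' i = \<gamma>' i" using IH i(1) by blast
        then have "\<beta> i - 1 = \<gamma> i - 1" unfolding \<beta>'_def \<gamma>'_def by simp
        then show ?thesis using True i(2) gi by simp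
      next
        case False
        have "\<beta>' t = \<gamma>' t" using IH t by blast
        then show ?thesis using False unfolding \<beta>'_def \<gamma>'_def by simp
      qed
    qed
  qed
qed


lemma match:
  fixes a b p q :: "nat \<Rightarrow> 'a::field" and \<beta> \<alpha> :: "nat \<Rightarrow> nat"
  assumes inf: "infinite (UNIV :: 'a set)" and fin: "finite S"
    and g1: "G = [:[:\<mu>:]:] * (\<Prod>i\<in>S. lin2 (a i) (b i) ^ \<beta> i)"
    and irr: "\<forall>i\<in>S. irreducible (lin2 (a i) (b i)) \<and> \<beta> i \<ge> 1"
    and dst: "\<forall>i\<in>S. \<forall>i'\<in>S. i \<noteq> i' \<longrightarrow> lin2 (a i) (b i) \<noteq> lin2 (a i') (b i')"
    and g2: "G = [:[:lam:]:] * (\<Prod>i\<in>S. lin2 (p i) (q i) ^ \<alpha> i)"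
    and pnz: "\<forall>i\<in>S. p i \<noteq> 0"
    and pinj: "\<forall>i\<in>S. \<forall>i'\<in>S. i \<noteq> i' \<longrightarrow> p i \<noteq> p i'"
    and lam: "lam \<noteq> 0"
  shows "\<mu> = lam \<and> (\<exists>f. bij_betw f S S \<and> (\<forall>i\<in>S. a i = p (f i) \<and> b i = q (f i) \<and> \<beta> i = \<alpha> (f i)))"
proof -
  have "eval2 G 0 0 = \<mu>" unfolding g1 by (simp only: eval2_mult eval2_const eval2_prod eval2_power eval2_lin2) simp
  moreover have "eval2 G 0 0 = lam" unfolding g2 by (simp only: eval2_mult eval2_const eval2_prod eval2_power eval2_lin2) simp
  ultimately have mu: "\<mu> = lam" by simp
  have ex: "\<exists>t\<in>S. p t = a i \<and> q t = b i" if i: "i \<in> S" for i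
  proof (rule line_cover[OF inf _ fin])
    show "a i \<noteq> 0 \<or> b i \<noteq> 0" using irr i lin2_irr_nz by blast
    fix x y assume l: "a i * x + b i * y + 1 = 0"
    have bi: "\<beta> i > 0" using irr i by auto
    have "eval2 (\<Prod>i\<in>S. lin2 (a i) (b i) ^ \<beta> i) x y = 0"
      by (rule eval2_prodexp[OF fin, THEN iffD2]) (use l i bi in blast)
    then have "eval2 G x y = 0" unfolding g1 by (simp only: eval2_mult) simp
    then have "lam * eval2 (\<Prod>i\<in>S. lin2 (p i) (q i) ^ \<alpha> i) x y = 0" unfolding g2 by (simp only: eval2_mult eval2_const)
    then have "eval2 (\<Prod>i\<in>S. lin2 (p i) (q i) ^ \<alpha> i) x y = 0" using lam by simp
    then have "\<exists>t\<in>S. \<alpha> t > 0 \<and> p t * x + q t * y + 1 = 0"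
      by (rule eval2_prodexp[OF fin, THEN iffD1])
    then show "\<exists>t\<in>S. p t * x + q t * y + 1 = 0" by blast
  qed
  define f where "f i = (SOME t. t \<in> S \<and> p t = a i \<and> q t = b i)" for i
  have f: "f i \<in> S \<and> p (f i) = a i \<and> q (f i) = b i" if "i \<in> S" for i
  proof -
    have "\<exists>t. t \<in> S \<and> p t = a i \<and> q t = b i" using ex[OF that] by blast
    then show ?thesis unfolding f_def by (rule someI_ex)
  qed
  have inj: "inj_on f S"
  proof (rule inj_onI)
    fix i i' assume ii: "i \<in> S" "i' \<in> S" "f i = f i'"
    then have "lin2 (a i) (b i) = lin2 (a i') (b i')" using f[OF ii(1)] f[OF ii(2)] by metis
    then show "i = i'" using dst ii by blast
  qed
  have sub: "f ` S \<subseteq> S" using f by blast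
  have bij: "bij_betw f S S" unfolding bij_betw_def using inj endo_inj_surj[OF fin sub inj] by blast
  have "(\<Prod>t\<in>S. lin2 (p t) (q t) ^ \<alpha> t) = (\<Prod>i\<in>S. lin2 (p (f i)) (q (f i)) ^ \<alpha> (f i))"
    using prod.reindex_bij_betw[OF bij, of "\<lambda>t. lin2 (p t) (q t) ^ \<alpha> t"] by simp
  also have "\<dots> = (\<Prod>i\<in>S. lin2 (a i) (b i) ^ \<alpha> (f i))"
    by (rule prod.cong) (use f in auto)
  finally have p2: "(\<Prod>t\<in>S. lin2 (p t) (q t) ^ \<alpha> t) = (\<Prod>i\<in>S. lin2 (a i) (b i) ^ \<alpha> (f i))" .
  have "[:[:lam:]:] * (\<Prod>i\<in>S. lin2 (a i) (b i) ^ \<beta> i) = [:[:lam:]:] * (\<Prod>i\<in>S. lin2 (a i) (b i) ^ \<alpha> (f i))"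
    using g1 g2 p2 mu by simp
  moreover have "[:[:lam:]:] \<noteq> 0" using lam by simp
  ultimately have peq: "(\<Prod>i\<in>S. lin2 (a i) (b i) ^ \<beta> i) = (\<Prod>i\<in>S. lin2 (a i) (b i) ^ \<alpha> (f i))"
    using mult_left_cancel by blast
  have nz: "\<forall>i\<in>S. a i \<noteq> 0 \<or> b i \<noteq> 0" using irr lin2_irr_nz by blast
  have dist: "\<forall>i\<in>S. \<forall>i'\<in>S. i \<noteq> i' \<longrightarrow> (a i \<noteq> a i' \<or> b i \<noteq> b i')" using dst by (simp add: lin2_inj)
  have "\<forall>i\<in>S. \<beta> i = \<alpha> (f i)"
    using exps_eq[OF inf fin nz dist, of \<beta> "\<lambda>i. \<alpha> (f i)"] peq by blast
  then show ?thesis using mu bij f by metis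
qed

lemma sum_pi:
  fixes l :: "nat \<Rightarrow> nat \<Rightarrow> 'a::field"
  assumes "2 \<le> j" "j \<le> n - 1" "4 \<le> n"
  shows "(\<Sum>m\<in>{1..n}. l i m * pi_pt n j x y m) = l i 1 * x + l i j * y + l i n"
proof -
  have d: "j \<noteq> 1" "j \<noteq> n" "(1::nat) \<noteq> n" using assms by auto
  have "(\<Sum>m\<in>{1..n}. l i m * pi_pt n j x y m) =
        (\<Sum>m\<in>{1..n}. (if m = 1 then l i 1 * x else 0) + (if m = j then l i j * y else 0) + (if m = n then l i n else 0))"
    by (rule sum.cong) (use d in \<open>auto simp: pi_pt_def\<close>)
  also have "\<dots> = l i 1 * x + l i j * y + l i n"
    using assms by (simp add: sum.distrib)
  finally show ?thesis .
qed

theorem proposition7: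
  fixes n k :: nat and lam :: "'a::field" and l :: "nat \<Rightarrow> nat \<Rightarrow> 'a" and \<alpha> :: "nat \<Rightarrow> nat"
    and G :: "nat \<Rightarrow> 'a poly poly"
  assumes inf: "infinite (UNIV :: 'a set)"
    and n4: "n \<ge> 4"
    and lam: "lam \<noteq> 0"
    and alpha_pos: "\<forall>i\<in>{1..k}. \<alpha> i \<ge> 1"
    and nonprop: "\<forall>i\<in>{1..k}. \<forall>i'\<in>{1..k}. i \<noteq> i' \<longrightarrow>
                    \<not> (\<exists>c. \<forall>m\<in>{1..n}. l i m = c * l i' m)"
    and distinct1: "\<forall>i\<in>{1..k}. \<forall>i'\<in>{1..k}. i \<noteq> i' \<longrightarrow> l i 1 \<noteq> l i' 1"
    and nonzero1: "\<forall>i\<in>{1..k}. l i 1 \<noteq> 0"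
    and lastone: "\<forall>i\<in>{1..k}. l i n = 1"
    \<comment> \<open>Step 1: G j is the (dense) bivariate polynomial g_j = f \<circ> pi_j\<close>
    and step1: "\<forall>j\<in>{2..n-1}. \<forall>x1 xj. eval2 (G j) x1 xj = feval n k lam l \<alpha> (pi_pt n j x1 xj)"
  shows
    \<comment> \<open>Step 2 is possible: each g_j factors into irreducibles of the displayed shape\<close>
    "(\<forall>j\<in>{2..n-1}. \<exists>(\<mu>::'a) (a::nat \<Rightarrow> 'a) (b::nat \<Rightarrow> 'a) (\<beta>::nat \<Rightarrow> nat).
        G j = [:[:\<mu>:]:] * (\<Prod>i\<in>{1..k}. lin2 (a i) (b i) ^ \<beta> i)
        \<and> (\<forall>i\<in>{1..k}. irreducible (lin2 (a i) (b i)) \<and> \<beta> i \<ge> 1)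
        \<and> (\<forall>i\<in>{1..k}. \<forall>i'\<in>{1..k}. i \<noteq> i' \<longrightarrow> lin2 (a i) (b i) \<noteq> lin2 (a i') (b i')))
   \<and>
    \<comment> \<open>for any such factorizations returned in Step 2 ...\<close>
    (\<forall>(\<mu>::nat \<Rightarrow> 'a) (a::nat \<Rightarrow> nat \<Rightarrow> 'a) (b::nat \<Rightarrow> nat \<Rightarrow> 'a) (\<beta>::nat \<Rightarrow> nat \<Rightarrow> nat).
      (\<forall>j\<in>{2..n-1}.
        G j = [:[:\<mu> j:]:] * (\<Prod>i\<in>{1..k}. lin2 (a j i) (b j i) ^ \<beta> j i)
        \<and> (\<forall>i\<in>{1..k}. irreducible (lin2 (a j i) (b j i)) \<and> \<beta> j i \<ge> 1)
        \<and> (\<forall>i\<in>{1..k}. \<forall>i'\<in>{1..k}. i \<noteq> i' \<longrightarrow> lin2 (a j i) (b j i) \<noteq> lin2 (a j i') (b j i')))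
      \<longrightarrow>
      \<comment> \<open>... Step 3 is possible: a reordering aligning the x_1-coefficients exists ...\<close>
      (\<exists>\<sigma>::nat \<Rightarrow> nat \<Rightarrow> nat. (\<forall>j\<in>{2..n-1}. bij_betw (\<sigma> j) {1..k} {1..k})
          \<and> (\<forall>j\<in>{2..n-1}. \<forall>j'\<in>{2..n-1}. \<forall>i\<in>{1..k}. a j (\<sigma> j i) = a j' (\<sigma> j' i)))
      \<and>
      \<comment> \<open>... and for every such reordering, exponents agree and the output of Step 4
          is the given factorization up to permutation of the factors\<close>
      (\<forall>\<sigma>::nat \<Rightarrow> nat \<Rightarrow> nat. (\<forall>j\<in>{2..n-1}. bij_betw (\<sigma> j) {1..k} {1..k})
          \<and> (\<forall>j\<in>{2..n-1}. \<forall>j'\<in>{2..n-1}. \<forall>i\<in>{1..k}. a j (\<sigma> j i) = a j' (\<sigma> j' i))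
        \<longrightarrow>
          (\<forall>j\<in>{2..n-1}. \<forall>j'\<in>{2..n-1}. \<forall>i\<in>{1..k}. \<beta> j (\<sigma> j i) = \<beta> j' (\<sigma> j' i))
          \<and> (\<forall>j\<in>{2..n-1}. \<mu> j = lam)
          \<and> (\<exists>\<tau>. bij_betw \<tau> {1..k} {1..k} \<and>
               (\<forall>i\<in>{1..k}. \<beta> 2 (\<sigma> 2 i) = \<alpha> (\<tau> i)
                  \<and> a 2 (\<sigma> 2 i) = l (\<tau> i) 1
                  \<and> (\<forall>j\<in>{2..n-1}. b j (\<sigma> j i) = l (\<tau> i) j)
                  \<and> l (\<tau> i) n = 1))))"
proof -
  define S where "S = {1..k::nat}"
  have finS: "finite S" unfolding S_def by simp
  have j2: "(2::nat) \<in> {2..n-1}" using n4 by auto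
  have true: "G j = [:[:lam:]:] * (\<Prod>i\<in>S. lin2 (l i 1) (l i j) ^ \<alpha> i)" if j: "j \<in> {2..n-1}" for j
  proof (rule poly2_eq[OF inf])
    fix x y
    have jj: "2 \<le> j" "j \<le> n - 1" using j by auto
    have "eval2 (G j) x y = feval n k lam l \<alpha> (pi_pt n j x y)" using step1 j by blast
    also have "\<dots> = lam * (\<Prod>i\<in>S. (l i 1 * x + l i j * y + 1) ^ \<alpha> i)"
      unfolding feval_def S_def
      by (rule arg_cong[where f = "\<lambda>z. lam * z"], rule prod.cong)
         (use sum_pi[OF jj n4, where l=l] lastone in auto)
    also have "\<dots> = eval2 ([:[:lam:]:] * (\<Prod>i\<in>S. lin2 (l i 1) (l i j) ^ \<alpha> i)) x y"
      by (simp only: eval2_mult eval2_const eval2_prod eval2_power eval2_lin2)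
    finally show "eval2 (G j) x y = eval2 ([:[:lam:]:] * (\<Prod>i\<in>S. lin2 (l i 1) (l i j) ^ \<alpha> i)) x y" .
  qed
  have irrl: "\<forall>i\<in>S. irreducible (lin2 (l i 1) (l i j)) \<and> \<alpha> i \<ge> 1" for j
    using lin2_irr nonzero1 alpha_pos unfolding S_def by blast
  have dstl: "\<forall>i\<in>S. \<forall>i'\<in>S. i \<noteq> i' \<longrightarrow> lin2 (l i 1) (l i j) \<noteq> lin2 (l i' 1) (l i' j)" for j
    using distinct1 unfolding S_def by (simp add: lin2_inj)
  have pnz: "\<forall>i\<in>S. l i 1 \<noteq> 0" using nonzero1 unfolding S_def by blast
  have pinj: "\<forall>i\<in>S. \<forall>i'\<in>S. i \<noteq> i' \<longrightarrow> l i 1 \<noteq> l i' 1" using distinct1 unfolding S_def by blast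
  have part1: "\<forall>j\<in>{2..n-1}. \<exists>(\<mu>::'a) (a::nat \<Rightarrow> 'a) (b::nat \<Rightarrow> 'a) (\<beta>::nat \<Rightarrow> nat).
        G j = [:[:\<mu>:]:] * (\<Prod>i\<in>{1..k}. lin2 (a i) (b i) ^ \<beta> i)
        \<and> (\<forall>i\<in>{1..k}. irreducible (lin2 (a i) (b i)) \<and> \<beta> i \<ge> 1)
        \<and> (\<forall>i\<in>{1..k}. \<forall>i'\<in>{1..k}. i \<noteq> i' \<longrightarrow> lin2 (a i) (b i) \<noteq> lin2 (a i') (b i'))"
  proof
    fix j assume j: "j \<in> {2..n-1}"
    show "\<exists>(\<mu>::'a) (a::nat \<Rightarrow> 'a) (b::nat \<Rightarrow> 'a) (\<beta>::nat \<Rightarrow> nat).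
        G j = [:[:\<mu>:]:] * (\<Prod>i\<in>{1..k}. lin2 (a i) (b i) ^ \<beta> i)
        \<and> (\<forall>i\<in>{1..k}. irreducible (lin2 (a i) (b i)) \<and> \<beta> i \<ge> 1)
        \<and> (\<forall>i\<in>{1..k}. \<forall>i'\<in>{1..k}. i \<noteq> i' \<longrightarrow> lin2 (a i) (b i) \<noteq> lin2 (a i') (b i'))"
      apply (rule exI[where x = lam], rule exI[where x = "\<lambda>i. l i 1"], rule exI[where x = "\<lambda>i. l i j"],
             rule exI[where x = \<alpha>])
      using true[OF j] irrl[of j] dstl[of j] unfolding S_def by blast
  qed
  have part2: "(\<exists>\<sigma>::nat \<Rightarrow> nat \<Rightarrow> nat. (\<forall>j\<in>{2..n-1}. bij_betw (\<sigma> j) {1..k} {1..k})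
          \<and> (\<forall>j\<in>{2..n-1}. \<forall>j'\<in>{2..n-1}. \<forall>i\<in>{1..k}. a j (\<sigma> j i) = a j' (\<sigma> j' i)))
      \<and>
      (\<forall>\<sigma>::nat \<Rightarrow> nat \<Rightarrow> nat. (\<forall>j\<in>{2..n-1}. bij_betw (\<sigma> j) {1..k} {1..k})
          \<and> (\<forall>j\<in>{2..n-1}. \<forall>j'\<in>{2..n-1}. \<forall>i\<in>{1..k}. a j (\<sigma> j i) = a j' (\<sigma> j' i))
        \<longrightarrow>
          (\<forall>j\<in>{2..n-1}. \<forall>j'\<in>{2..n-1}. \<forall>i\<in>{1..k}. \<beta> j (\<sigma> j i) = \<beta> j' (\<sigma> j' i))
          \<and> (\<forall>j\<in>{2..n-1}. \<mu> j = lam)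
          \<and> (\<exists>\<tau>. bij_betw \<tau> {1..k} {1..k} \<and>
               (\<forall>i\<in>{1..k}. \<beta> 2 (\<sigma> 2 i) = \<alpha> (\<tau> i)
                  \<and> a 2 (\<sigma> 2 i) = l (\<tau> i) 1
                  \<and> (\<forall>j\<in>{2..n-1}. b j (\<sigma> j i) = l (\<tau> i) j)
                  \<and> l (\<tau> i) n = 1)))"
    if H: "\<forall>j\<in>{2..n-1}.
        G j = [:[:\<mu> j:]:] * (\<Prod>i\<in>{1..k}. lin2 (a j i) (b j i) ^ \<beta> j i)
        \<and> (\<forall>i\<in>{1..k}. irreducible (lin2 (a j i) (b j i)) \<and> \<beta> j i \<ge> 1)
        \<and> (\<forall>i\<in>{1..k}. \<forall>i'\<in>{1..k}. i \<noteq> i' \<longrightarrow> lin2 (a j i) (b j i) \<noteq> lin2 (a j i') (b j i'))"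
    for \<mu> :: "nat \<Rightarrow> 'a" and a b :: "nat \<Rightarrow> nat \<Rightarrow> 'a" and \<beta> :: "nat \<Rightarrow> nat \<Rightarrow> nat"
  proof -
    have M: "\<mu> j = lam \<and> (\<exists>f. bij_betw f S S \<and> (\<forall>i\<in>S. a j i = l (f i) 1 \<and> b j i = l (f i) j \<and> \<beta> j i = \<alpha> (f i)))"
      if j: "j \<in> {2..n-1}" for j
    proof (rule match[OF inf finS])
      show "G j = [:[:\<mu> j:]:] * (\<Prod>i\<in>S. lin2 (a j i) (b j i) ^ \<beta> j i)" using H j unfolding S_def by blast
      show "\<forall>i\<in>S. irreducible (lin2 (a j i) (b j i)) \<and> \<beta> j i \<ge> 1" using H j unfolding S_def by blast
      show "\<forall>i\<in>S. \<forall>i'\<in>S. i \<noteq> i' \<longrightarrow> lin2 (a j i) (b j i) \<noteq> lin2 (a j i') (b j i')" using H j unfolding S_def by blast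
      show "G j = [:[:lam:]:] * (\<Prod>i\<in>S. lin2 (l i 1) (l i j) ^ \<alpha> i)" using true[OF j] .
    qed (use pnz pinj lam in auto)
    have mu: "\<forall>j\<in>{2..n-1}. \<mu> j = lam" using M by blast
    have "\<forall>j\<in>{2..n-1}. \<exists>f. bij_betw f S S \<and> (\<forall>i\<in>S. a j i = l (f i) 1 \<and> b j i = l (f i) j \<and> \<beta> j i = \<alpha> (f i))"
      using M by blast
    then obtain F where F: "\<And>j. j \<in> {2..n-1} \<Longrightarrow> bij_betw (F j) S S \<and> (\<forall>i\<in>S. a j i = l (F j i) 1 \<and> b j i = l (F j i) j \<and> \<beta> j i = \<alpha> (F j i))"
      by metis
    have ex: "\<exists>\<sigma>::nat \<Rightarrow> nat \<Rightarrow> nat. (\<forall>j\<in>{2..n-1}. bij_betw (\<sigma> j) {1..k} {1..k})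
          \<and> (\<forall>j\<in>{2..n-1}. \<forall>j'\<in>{2..n-1}. \<forall>i\<in>{1..k}. a j (\<sigma> j i) = a j' (\<sigma> j' i))"
    proof (rule exI[where x = "\<lambda>j. inv_into S (F j)"], intro conjI ballI)
      fix j assume j: "j \<in> {2..n-1}"
      show "bij_betw (inv_into S (F j)) {1..k} {1..k}" using F[OF j] bij_betw_inv_into unfolding S_def by blast
    next
      fix j j' i assume j: "j \<in> {2..n-1}" and j': "j' \<in> {2..n-1}" and i: "i \<in> {1..k}"
      have "a j (inv_into S (F j) i) = l i 1" if j: "j \<in> {2..n-1}" for j
      proof -
        have b: "bij_betw (F j) S S" using F[OF j] by blast
        have iS: "i \<in> S" using i unfolding S_def by simp
        have im: "inv_into S (F j) i \<in> S" using b iS by (metis bij_betw_def inv_into_into)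
        have "F j (inv_into S (F j) i) = i" using b iS by (metis bij_betw_def f_inv_into_f)
        then show ?thesis using F[OF j] im by metis
      qed
      then show "a j (inv_into S (F j) i) = a j' (inv_into S (F j') i)" using j j' by metis
    qed
    have all: "(\<forall>j\<in>{2..n-1}. \<forall>j'\<in>{2..n-1}. \<forall>i\<in>{1..k}. \<beta> j (\<sigma> j i) = \<beta> j' (\<sigma> j' i))
          \<and> (\<forall>j\<in>{2..n-1}. \<mu> j = lam)
          \<and> (\<exists>\<tau>. bij_betw \<tau> {1..k} {1..k} \<and>
               (\<forall>i\<in>{1..k}. \<beta> 2 (\<sigma> 2 i) = \<alpha> (\<tau> i)
                  \<and> a 2 (\<sigma> 2 i) = l (\<tau> i) 1
                  \<and> (\<forall>j\<in>{2..n-1}. b j (\<sigma> j i) = l (\<tau> i) j)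
                  \<and> l (\<tau> i) n = 1))"
      if sb: "\<forall>j\<in>{2..n-1}. bij_betw (\<sigma> j) {1..k} {1..k}"
        and sa: "\<forall>j\<in>{2..n-1}. \<forall>j'\<in>{2..n-1}. \<forall>i\<in>{1..k}. a j (\<sigma> j i) = a j' (\<sigma> j' i)"
      for \<sigma> :: "nat \<Rightarrow> nat \<Rightarrow> nat"
    proof -
      define \<tau> where "\<tau> i = F 2 (\<sigma> 2 i)" for i
      have tb: "bij_betw \<tau> S S"
      proof -
        have "bij_betw (F 2 \<circ> \<sigma> 2) S S" using bij_betw_trans sb j2 F[OF j2] unfolding S_def by blast
        then show ?thesis unfolding \<tau>_def comp_def by simp
      qed
      have key: "F j (\<sigma> j i) = \<tau> i \<and> \<sigma> j i \<in> S" if j: "j \<in> {2..n-1}" and i: "i \<in> S" for j i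
      proof -
        have s1: "\<sigma> j i \<in> S" using sb j i unfolding S_def by (metis bij_betwE)
        have s2: "\<sigma> 2 i \<in> S" using sb j2 i unfolding S_def by (metis bij_betwE)
        have f1: "F j (\<sigma> j i) \<in> S" using F[OF j] s1 by (metis bij_betwE)
        have f2: "\<tau> i \<in> S" using tb i by (metis bij_betwE)
        have "l (F j (\<sigma> j i)) 1 = a j (\<sigma> j i)" using F[OF j] s1 by metis
        also have "\<dots> = a 2 (\<sigma> 2 i)" using sa j j2 i unfolding S_def by blast
        also have "\<dots> = l (\<tau> i) 1" using F[OF j2] s2 unfolding \<tau>_def by metis
        finally show ?thesis using pinj f1 f2 s1 by metis
      qed
      have bet: "\<beta> j (\<sigma> j i) = \<alpha> (\<tau> i)" if j: "j \<in> {2..n-1}" and i: "i \<in> S" for j i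
        using key[OF j i] F[OF j] by metis
      have bb: "b j (\<sigma> j i) = l (\<tau> i) j" if j: "j \<in> {2..n-1}" and i: "i \<in> S" for j i
        using key[OF j i] F[OF j] by metis
      have aa: "a 2 (\<sigma> 2 i) = l (\<tau> i) 1" if i: "i \<in> S" for i
        using key[OF j2 i] F[OF j2] by metis
      have ln: "l (\<tau> i) n = 1" if i: "i \<in> S" for i
        using tb i lastone unfolding S_def by (metis bij_betwE)
      show ?thesis
      proof (intro conjI)
        show "\<forall>j\<in>{2..n-1}. \<forall>j'\<in>{2..n-1}. \<forall>i\<in>{1..k}. \<beta> j (\<sigma> j i) = \<beta> j' (\<sigma> j' i)"
          using bet unfolding S_def by simp
        show "\<forall>j\<in>{2..n-1}. \<mu> j = lam" using mu .
        show "\<exists>\<tau>. bij_betw \<tau> {1..k} {1..k} \<and>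
               (\<forall>i\<in>{1..k}. \<beta> 2 (\<sigma> 2 i) = \<alpha> (\<tau> i)
                  \<and> a 2 (\<sigma> 2 i) = l (\<tau> i) 1
                  \<and> (\<forall>j\<in>{2..n-1}. b j (\<sigma> j i) = l (\<tau> i) j)
                  \<and> l (\<tau> i) n = 1)"
          using tb bet[OF j2] aa bb ln unfolding S_def by blast
      qed
    qed
    show ?thesis using ex all by blast
  qed
  show ?thesis using part1 part2 by blast
qed

end
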